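(* Let $G$ be a connected finite simple graph. If $G$ has a cut-vertex, then $\alpha^*(G)\geq 2$.
   Context: An independent set $I$ of $G$ is light if $\sum_{u\in I}d_G(u)\le |V(G)|-1$; $\alpha^*(G)$ is the maximum size of a light independent set of $G$. *)

theory Defs
  imports Main
begin

definition simple_graph :: "'a set \<Rightarrow> 'a set set \<Rightarrow> bool" where
  "simple_graph V E \<longleftrightarrow> finite V \<and> (\<forall>e\<in>E. e \<subseteq> V \<and> card e = 2)"

definition degree :: "'a set set \<Rightarrow> 'a \<Rightarrow> nat" where
  "degree E u = card {e\<in>E. u \<in> e}"

inductive reachable :: "'a set \<Rightarrow> 'a set set \<Rightarrow> 'a \<Rightarrow> 'a \<Rightarrow> bool"
  for V E where
  refl: "u \<in> V \<Longrightarrow> reachable V E u u"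
| step: "reachable V E u v \<Longrightarrow> {v, w} \<in> E \<Longrightarrow> reachable V E u w"

definition connected_graph :: "'a set \<Rightarrow> 'a set set \<Rightarrow> bool" where
  "connected_graph V E \<longleftrightarrow> V \<noteq> {} \<and> (\<forall>u\<in>V. \<forall>v\<in>V. reachable V E u v)"

definition del_vertex_E :: "'a set set \<Rightarrow> 'a \<Rightarrow> 'a set set" where
  "del_vertex_E E v = {e\<in>E. v \<notin> e}"

definition components :: "'a set \<Rightarrow> 'a set set \<Rightarrow> 'a set set" where
  "components V E = (\<lambda>u. {w\<in>V. reachable V E u w}) ` V"

definition num_components :: "'a set \<Rightarrow> 'a set set \<Rightarrow> nat" where
  "num_components V E = card (components V E)"

definition cut_vertex :: "'a set \<Rightarrow> 'a set set \<Rightarrow> 'a \<Rightarrow> bool" where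
  "cut_vertex V E v \<longleftrightarrow> v \<in> V \<and>
     num_components (V - {v}) (del_vertex_E E v) > num_components V E"

definition independent_set :: "'a set \<Rightarrow> 'a set set \<Rightarrow> 'a set \<Rightarrow> bool" where
  "independent_set V E I \<longleftrightarrow> I \<subseteq> V \<and> (\<forall>u\<in>I. \<forall>w\<in>I. {u, w} \<notin> E)"

definition light_independent_set :: "'a set \<Rightarrow> 'a set set \<Rightarrow> 'a set \<Rightarrow> bool" where
  "light_independent_set V E I \<longleftrightarrow> independent_set V E I \<and>
     int (\<Sum>u\<in>I. degree E u) \<le> int (card V) - 1"

definition alpha_star :: "'a set \<Rightarrow> 'a set set \<Rightarrow> nat" where
  "alpha_star V E = Max (card ` {I. light_independent_set V E I})"

end

theory Submission
  imports Defs
begin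

lemma reach_trans:
  assumes "reachable V E v w" "reachable V E u v"
  shows "reachable V E u w"
  using assms by (induction rule: reachable.induct) (auto intro: reachable.step)

lemma reach_inV:
  assumes "reachable V E u v" "\<forall>e\<in>E. e \<subseteq> V"
  shows "u \<in> V \<and> v \<in> V"
  using assms by (induction rule: reachable.induct) auto

lemma reach_sym:
  assumes "reachable V E u v" "\<forall>e\<in>E. e \<subseteq> V"
  shows "reachable V E v u"
  using assms
proof (induction rule: reachable.induct)
  case (refl u)
  then show ?case by (simp add: reachable.refl)
next
  case (step u v w)
  have "w \<in> V" using step by auto
  then have "reachable V E w w" by (rule reachable.refl)
  moreover have "{w, v} \<in> E" using step by (simp add: insert_commute)
  ultimately have "reachable V E w v" by (rule reachable.step)
  then show ?case using step reach_trans by metis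
qed

lemma deg_bound:
  assumes sg: "simple_graph V E" and uC: "u \<in> C" and vC: "v \<notin> C"
    and Cdef: "C = {x\<in>V - {v}. reachable (V - {v}) (del_vertex_E E v) u x}"
    and uv: "u \<noteq> v"
  shows "degree E u \<le> card C"
proof -
  have fin: "finite V" using sg by (simp add: simple_graph_def)
  have finC: "finite C" using fin Cdef by simp
  have sub: "{e\<in>E. u \<in> e} \<subseteq> (\<lambda>x. {u,x}) ` (insert v C - {u})"
  proof
    fix e assume e: "e \<in> {e\<in>E. u \<in> e}"
    then have eV: "e \<subseteq> V" and c2: "card e = 2" and ue: "u \<in> e" and eE: "e \<in> E"
      using sg by (auto simp: simple_graph_def)
    obtain a b where ab: "e = {a,b}" "a \<noteq> b" using c2 card_2_iff[of e] by blast
    obtain x where x: "e = {u,x}" "x \<noteq> u" using ab ue by auto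
    have xV: "x \<in> V" using x eV by auto
    have "x \<in> insert v C"
    proof (cases "x = v")
      case True then show ?thesis by simp
    next
      case False
      have "e \<in> del_vertex_E E v" using eE x False uv by (auto simp: del_vertex_E_def)
      moreover have "reachable (V - {v}) (del_vertex_E E v) u u"
        using uC Cdef by (auto intro: reachable.refl)
      ultimately have "reachable (V - {v}) (del_vertex_E E v) u x"
        using x by (auto intro: reachable.step)
      then show ?thesis using Cdef xV False by auto
    qed
    then show "e \<in> (\<lambda>x. {u,x}) ` (insert v C - {u})" using x by auto
  qed
  have "degree E u \<le> card ((\<lambda>x. {u,x}) ` (insert v C - {u}))"
    unfolding degree_def by (rule card_mono) (use finC sub in auto)
  also have "\<dots> \<le> card (insert v C - {u})" by (rule card_image_le) (use finC in auto)
  also have "\<dots> = card C" using finC uC vC uv by simp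
  finally show ?thesis .
qed

theorem lemma2p3:
  fixes V :: "'a set" and E :: "'a set set"
  assumes "simple_graph V E"
    and "connected_graph V E"
    and "\<exists>v. cut_vertex V E v"
  shows "alpha_star V E \<ge> 2"
proof -
  have sg: "simple_graph V E" by fact
  have fin: "finite V" and EV: "\<forall>e\<in>E. e \<subseteq> V" and c2: "\<forall>e\<in>E. card e = 2"
    using sg by (auto simp: simple_graph_def)
  obtain v where cv: "cut_vertex V E v" using assms(3) by blast
  have vV: "v \<in> V" using cv by (simp add: cut_vertex_def)
  define V' where "V' = V - {v}"
  define E' where "E' = del_vertex_E E v"
  have E'V: "\<forall>e\<in>E'. e \<subseteq> V'" using EV by (auto simp: E'_def V'_def del_vertex_E_def)
  have "num_components V E \<ge> 1"
  proof -
    have "components V E \<noteq> {}" using vV by (auto simp: components_def)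
    moreover have "finite (components V E)" using fin by (simp add: components_def)
    ultimately show ?thesis unfolding num_components_def by (simp add: Suc_le_eq card_gt_0_iff)
  qed
  then have "card (components V' E') \<ge> 2"
    using cv unfolding cut_vertex_def num_components_def V'_def E'_def by linarith
  then obtain A B where AB: "A \<in> components V' E'" "B \<in> components V' E'" "A \<noteq> B"
  proof -
    assume h: "\<And>A B. A \<in> components V' E' \<Longrightarrow> B \<in> components V' E' \<Longrightarrow> A \<noteq> B \<Longrightarrow> thesis"
    have fS: "finite (components V' E')"
      by (rule card_ge_0_finite) (use \<open>card (components V' E') \<ge> 2\<close> in linarith)
    have "\<not> card (components V' E') \<le> Suc 0" using \<open>card (components V' E') \<ge> 2\<close> by linarith
    then obtain A B where "A \<in> components V' E'" "B \<in> components V' E'" "A \<noteq> B"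
      using card_le_Suc0_iff_eq[OF fS] by blast
    then show thesis by (rule h)
  qed
  then obtain u w where uw: "u \<in> V'" "w \<in> V'"
    and A: "A = {x\<in>V'. reachable V' E' u x}" and B: "B = {x\<in>V'. reachable V' E' w x}"
    unfolding components_def by auto
  have nr: "\<not> reachable V' E' u w"
  proof
    assume r: "reachable V' E' u w"
    have "A = B"
    proof (rule set_eqI)
      fix x
      have r': "reachable V' E' w u" using reach_sym[OF r E'V] .
      have "reachable V' E' u x \<longleftrightarrow> reachable V' E' w x"
        using reach_trans[of V' E' u x w, OF _ r'] reach_trans[of V' E' w x u, OF _ r] by blast
      then show "x \<in> A \<longleftrightarrow> x \<in> B" using A B by blast
    qed
    then show False using AB by simp
  qed
  have disj: "A \<inter> B = {}"
  proof (rule ccontr)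
    assume "A \<inter> B \<noteq> {}"
    then obtain x where "reachable V' E' u x" "reachable V' E' w x" using A B by auto
    then have "reachable V' E' u x" "reachable V' E' x w" using reach_sym[OF _ E'V] by auto
    then have "reachable V' E' u w" using reach_trans[of V' E' x w u] by blast
    then show False using nr by simp
  qed
  have uA: "u \<in> A" using A uw by (auto intro: reachable.refl)
  have wB: "w \<in> B" using B uw by (auto intro: reachable.refl)
  have uw_ne: "u \<noteq> w" using nr uw by (auto intro: reachable.refl)
  have uv: "u \<noteq> v" "w \<noteq> v" using uw V'_def by auto
  have du: "degree E u \<le> card A"
    by (rule deg_bound[OF sg uA _ A[unfolded V'_def E'_def] uv(1)]) (use A V'_def in auto)
  have dw: "degree E w \<le> card B"
    by (rule deg_bound[OF sg wB _ B[unfolded V'_def E'_def] uv(2)]) (use B V'_def in auto)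
  have ABsub: "A \<union> B \<subseteq> V'" using A B by auto
  have "card A + card B = card (A \<union> B)"
  proof -
    have "finite V'" using fin V'_def by simp
    then have "finite A" "finite B" using ABsub finite_subset by blast+
    then show ?thesis using disj card_Un_disjoint by metis
  qed
  also have "\<dots> \<le> card V'" using ABsub fin V'_def by (simp add: card_mono)
  also have "\<dots> = card V - 1" using V'_def vV fin by simp
  finally have sumle: "degree E u + degree E w \<le> card V - 1" using du dw by linarith
  have cardpos: "card V \<ge> 1" proof -
    have "card V > 0" using fin vV card_gt_0_iff by blast
    then show ?thesis by linarith
  qed
  have indep: "independent_set V E {u, w}"
  proof -
    have "{u,w} \<subseteq> V" using uw V'_def by auto
    moreover have "{u,u} \<notin> E" "{w,w} \<notin> E" using c2 by auto
    moreover have "{u,w} \<notin> E"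
    proof
      assume "{u,w} \<in> E"
      then have "{u,w} \<in> E'" using uv by (auto simp: E'_def del_vertex_E_def)
      then have "reachable V' E' u w" using uw by (auto intro: reachable.step reachable.refl)
      then show False using nr by simp
    qed
    moreover have "{w,u} \<notin> E" using calculation by (simp add: insert_commute)
    ultimately show ?thesis unfolding independent_set_def by auto
  qed
  have light: "light_independent_set V E {u, w}"
    unfolding light_independent_set_def using indep sumle uw_ne cardpos by simp
  have finS: "finite (card ` {I. light_independent_set V E I})"
  proof -
    have "{I. light_independent_set V E I} \<subseteq> Pow V"
      by (auto simp: light_independent_set_def independent_set_def)
    then have "finite {I. light_independent_set V E I}" using fin finite_subset by blast
    then show ?thesis by simp
  qed
  have "card {u,w} \<in> card ` {I. light_independent_set V E I}" using light by blast
  then have "card {u,w} \<le> alpha_star V E"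
    unfolding alpha_star_def using finS by (rule Max_ge[rotated])
  then show ?thesis using uw_ne by simp
qed

end
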